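(* Let $p$ be a prime, $m\ge1$, $s\ge0$ integers, $R^4=\mathbb{F}_{p^m}[u]/\langle u^4\rangle$, $f(x)\in\mathbb{F}_{p^m}[x]$ irreducible, $\omega(x)=f(x)^{p^s}$, $R^{4,\omega}=R^4[x]/\langle\omega(x)\rangle$ and $R^{1,\omega}=\mathbb{F}_{p^m}[x]/\langle\omega(x)\rangle$. Let $a,t$ be integers with $0\le t<a\le p^s-1$, and let $h(x)\in R^{1,\omega}$ be either $0$ or a unit of $R^{1,\omega}$. Let $L$ be the smallest non-negative integer such that $u^3f(x)^L\in\langle u^2f(x)^a+u^3f(x)^t h(x)\rangle$ (ideal of $R^{4,\omega}$). Then $$L=\begin{cases} a & \text{if } h(x)=0,\\ \min\{a,\ p^s-a+t\} & \text{if } h(x)\ne0.\end{cases}$$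
   Context: $R^{1,\omega}$ is identified with the subring of $R^{4,\omega}$ consisting of classes of polynomials over $\mathbb{F}_{p^m}$ (no $u$). *)

theory Defs
  imports "HOL-Computational_Algebra.Computational_Algebra"
begin

text \<open>Elements of R^4[x] = F[u,x]/(u^4) are represented by polynomials in u whose
coefficients are polynomials in x, i.e. by values of type 'a poly poly
(outer variable u, inner variable x).  The ring R^{4,omega} = R^4[x]/(omega(x)) is
F[x][u]/(u^4, omega(x)).  Hence y lies in the principal ideal generated by g in
R^{4,omega} iff y lies in the ideal of F[x][u] generated by g, u^4 and omega.\<close>

definition R4w_in_ideal :: "'a::field poly \<Rightarrow> 'a poly poly \<Rightarrow> 'a poly poly \<Rightarrow> bool" where
  "R4w_in_ideal \<omega> g y \<longleftrightarrow>
     (\<exists>r q1 q2. y = r * g + q1 * monom 1 4 + q2 * [:\<omega>:])"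

end

theory Submission imports Defs begin

lemma mem_iff:
  fixes w A B c :: "'a::field poly"
  shows "R4w_in_ideal w (monom A 2 + monom B 3) (monom c 3) \<longleftrightarrow>
    (\<exists>r0 r1. w dvd r0*A \<and> w dvd (c - r0*B - r1*A))"
proof
  assume "R4w_in_ideal w (monom A 2 + monom B 3) (monom c 3)"
  then obtain r q1 q2 where e: "monom c 3 = r * (monom A 2 + monom B 3) + q1 * monom 1 4 + q2 * [:w:]"
    unfolding R4w_in_ideal_def by blast
  have e2: "monom c 3 = monom A 2 * r + monom B 3 * r + monom 1 4 * q1 + smult w q2"
    using e by (simp add: algebra_simps)
  have c2: "coeff (monom c 3) 2 = coeff (monom A 2 * r + monom B 3 * r + monom 1 4 * q1 + smult w q2) 2"
    using e2 by simp
  have c3: "coeff (monom c 3) 3 = coeff (monom A 2 * r + monom B 3 * r + monom 1 4 * q1 + smult w q2) 3"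
    using e2 by simp
  from c2 have "0 = A * coeff r 0 + w * coeff q2 2"
    by (simp add: coeff_monom_mult)
  hence d1: "w dvd coeff r 0 * A"
    by (metis dvd_triv_left dvd_minus_iff add_eq_0_iff mult.commute)
  from c3 have "c = A * coeff r 1 + B * coeff r 0 + w * coeff q2 3"
    by (simp add: coeff_monom_mult numeral_3_eq_3 numeral_2_eq_2)
  hence "c - coeff r 0 * B - coeff r 1 * A = w * coeff q2 3" by (simp add: algebra_simps)
  hence "w dvd c - coeff r 0 * B - coeff r 1 * A" by simp
  with d1 show "\<exists>r0 r1. w dvd r0*A \<and> w dvd (c - r0*B - r1*A)" by blast
next
  assume "\<exists>r0 r1. w dvd r0*A \<and> w dvd (c - r0*B - r1*A)"
  then obtain r0 r1 k2 k3 where k2: "r0*A = w*k2" and k3: "c - r0*B - r1*A = w*k3"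
    by (auto elim!: dvdE)
  show "R4w_in_ideal w (monom A 2 + monom B 3) (monom c 3)"
    unfolding R4w_in_ideal_def
  proof (intro exI)
    show "monom c 3 = [:r0, r1:] * (monom A 2 + monom B 3) + [:-(r1*B):] * monom 1 4
       + (monom (-k2) 2 + monom k3 3) * [:w:]"
    proof -
      have p: "[:r0, r1:] = monom r0 0 + monom r1 1" by (simp add: monom_0 monom_Suc)
      have q: "\<And>a. [:a:] = monom a 0" by (simp add: monom_0)
      show ?thesis unfolding p unfolding q
        apply (simp only: ring_distribs mult_monom)
        apply (rule poly_eqI)
        using k2 k3 by (auto simp: coeff_monom algebra_simps)
    qed
  qed
qed

lemma pow_dvd_pow_le:
  fixes f :: "'a::field poly"
  assumes "irreducible f" and "f ^ M dvd f ^ L" shows "M \<le> L"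
proof (rule ccontr)
  assume "\<not> M \<le> L"
  hence "M = L + (M - L)" by simp
  hence "f ^ M = f ^ L * f ^ (M - L)" by (metis power_add)
  with assms(2) have "f ^ L * f ^ (M - L) dvd f ^ L * 1" by simp
  moreover have "f ^ L \<noteq> 0" using assms(1) by (simp add: irreducible_def)
  ultimately have "f ^ (M - L) dvd 1" by (subst (asm) dvd_mult_cancel_left) auto
  hence "is_unit f" using \<open>\<not> M \<le> L\<close> by (simp add: is_unit_power_iff)
  with assms(1) show False by (simp add: irreducible_def)
qed

theorem proposition4p1:
  fixes p m s a t :: nat and f h :: "'a::{field,finite} poly"
  assumes "prime p" and "m \<ge> 1" and "card (UNIV :: 'a set) = p ^ m"
    and "irreducible f"
    and "t < a" and "a \<le> p ^ s - 1"
    and "h mod f ^ (p ^ s) = 0 \<or> (\<exists>v. (h * v) mod f ^ (p ^ s) = 1)"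
  shows "(LEAST L. R4w_in_ideal (f ^ (p ^ s))
                     (monom (f ^ a) 2 + monom (f ^ t * h) 3)
                     (monom (f ^ L) 3))
         = (if h mod f ^ (p ^ s) = 0 then a else min a (p ^ s - a + t))"
proof -
  define N where "N = p ^ s"
  have aN: "a < N" using assms(5,6) unfolding N_def by linarith
  have fnz: "f \<noteq> 0" using assms(4) by (simp add: irreducible_def)
  have fa_dvd: "f ^ a dvd f ^ N" using aN by (simp add: le_imp_power_dvd)
  have main: "(LEAST L. \<exists>r0 r1. f ^ N dvd r0 * f ^ a \<and> f ^ N dvd f ^ L - r0 * (f ^ t * h) - r1 * f ^ a)
     = (if h mod f ^ N = 0 then a else min a (N - a + t))"
  proof (cases "h mod f ^ N = 0")
    case True
    hence hd: "f ^ N dvd h" by (simp add: mod_eq_0_iff_dvd)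
    have "(LEAST L. \<exists>r0 r1. f ^ N dvd r0 * f ^ a \<and> f ^ N dvd f ^ L - r0 * (f ^ t * h) - r1 * f ^ a) = a"
    proof (rule Least_equality)
      show "\<exists>r0 r1. f ^ N dvd r0 * f ^ a \<and> f ^ N dvd f ^ a - r0 * (f ^ t * h) - r1 * f ^ a"
        by (rule exI[of _ 0], rule exI[of _ 1]) simp
    next
      fix L assume "\<exists>r0 r1. f ^ N dvd r0 * f ^ a \<and> f ^ N dvd f ^ L - r0 * (f ^ t * h) - r1 * f ^ a"
      then obtain r0 r1 where d: "f ^ N dvd f ^ L - r0 * (f ^ t * h) - r1 * f ^ a" by blast
      have "f ^ a dvd (f ^ L - r0 * (f ^ t * h) - r1 * f ^ a) + r0 * (f ^ t * h) + r1 * f ^ a"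
        using dvd_trans[OF fa_dvd d] dvd_trans[OF fa_dvd hd]
        by (intro dvd_add) auto
      hence "f ^ a dvd f ^ L" by simp
      thus "a \<le> L" using pow_dvd_pow_le assms(4) by blast
    qed
    thus ?thesis using True by simp
  next
    case False
    then obtain v where hv: "(h * v) mod f ^ N = 1" using assms(7) unfolding N_def by blast
    define k where "k = (h * v) div f ^ N"
    have hvk: "h * v = f ^ N * k + 1" using div_mult_mod_eq[of "h*v" "f^N"] hv unfolding k_def
      by (simp add: algebra_simps)
    define M where "M = min a (N - a + t)"
    have "(LEAST L. \<exists>r0 r1. f ^ N dvd r0 * f ^ a \<and> f ^ N dvd f ^ L - r0 * (f ^ t * h) - r1 * f ^ a) = M"
    proof (rule Least_equality)
      show "\<exists>r0 r1. f ^ N dvd r0 * f ^ a \<and> f ^ N dvd f ^ M - r0 * (f ^ t * h) - r1 * f ^ a"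
      proof (cases "a \<le> N - a + t")
        case True
        then show ?thesis unfolding M_def
          by (intro exI[of _ 0] exI[of _ 1]) simp
      next
        case F2: False
        hence M: "M = N - a + t" unfolding M_def by simp
        have Na: "f ^ N = f ^ (N - a) * f ^ a" using aN by (metis power_add le_add_diff_inverse2 less_imp_le)
        have e1: "f ^ (N - a) * v * f ^ a = f ^ N * v"
          unfolding Na by (simp add: ac_simps)
        have fM: "f ^ M = f ^ (N - a) * f ^ t" unfolding M by (simp add: power_add)
        have "f ^ M - f ^ (N - a) * v * (f ^ t * h) - 0 * f ^ a = f ^ M - f ^ M * (h * v)"
          unfolding fM by (simp add: ac_simps)
        also have "\<dots> = f ^ N * (- (f ^ M * k))" unfolding hvk by (simp add: algebra_simps)
        finally show ?thesis
          by (intro exI[of _ "f ^ (N - a) * v"] exI[of _ 0]) (simp add: e1)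
      qed
    next
      fix L assume "\<exists>r0 r1. f ^ N dvd r0 * f ^ a \<and> f ^ N dvd f ^ L - r0 * (f ^ t * h) - r1 * f ^ a"
      then obtain r0 r1 where d0: "f ^ N dvd r0 * f ^ a"
        and d: "f ^ N dvd f ^ L - r0 * (f ^ t * h) - r1 * f ^ a" by blast
      have Na: "f ^ N = f ^ (N - a) * f ^ a" using aN by (metis power_add le_add_diff_inverse2 less_imp_le)
      have "f ^ (N - a) * f ^ a dvd r0 * f ^ a"
        using d0 Na by simp
      hence r0d: "f ^ (N - a) dvd r0" using fnz by (subst (asm) dvd_mult_cancel_right) auto
      have MN: "f ^ M dvd f ^ N" using aN unfolding M_def by (simp add: le_imp_power_dvd)
      have Ma: "f ^ M dvd f ^ a" unfolding M_def by (simp add: le_imp_power_dvd)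
      have "f ^ M dvd f ^ (N - a + t)" unfolding M_def
        by (simp add: le_imp_power_dvd)
      hence "f ^ M dvd f ^ (N - a) * f ^ t" by (simp add: power_add)
      moreover have "f ^ (N - a) * f ^ t dvd r0 * f ^ t" using r0d by (simp add: mult_dvd_mono)
      ultimately have "f ^ M dvd r0 * f ^ t * h" by (meson dvd_trans dvd_mult2)
      hence M0: "f ^ M dvd r0 * (f ^ t * h)" by (simp add: mult.assoc)
      have "f ^ M dvd (f ^ L - r0 * (f ^ t * h) - r1 * f ^ a) + r0 * (f ^ t * h) + r1 * f ^ a"
        using dvd_trans[OF MN d] M0 Ma
        by (intro dvd_add) auto
      hence "f ^ M dvd f ^ L" by simp
      thus "M \<le> L" using pow_dvd_pow_le assms(4) by blast
    qed
    thus ?thesis using False unfolding M_def by simp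
  qed
  show ?thesis using main unfolding mem_iff N_def .
qed

end
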